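(* Let $n\in\mathbb{N}_+$, $n\ge 3$, and for $x\in[0,1]$ let \[ \Phi_n(x):=(n+1)\int_0^1 \left(t^2+(1-t)^2\right)\frac{(nx-3)t^2(1-t)^{n-2}-(nx-2)t^3(1-t)^{n-3}+t^{nx}(1-t)^{n(1-x)}}{(1-2t)^2}\,dt. \] Then $\Phi_n$ is convex on $[0,1]$ and \[ -\frac{4}{n}\le \Phi_n(x)\le\frac{16}{n},\quad x\in\left[\frac1n,1-\frac1n\right]. \] *)

theory Defs
  imports "HOL-Analysis.Analysis"
begin

text \<open>The integrand has a removable singularity at t = 1/2 (a single point, irrelevant
  for the integral).\<close>

definition Phi :: "nat \<Rightarrow> real \<Rightarrow> real" where
  "Phi n x = (real n + 1) * integral {0..1} (\<lambda>t::real.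
     (t^2 + (1 - t)^2) *
     (((real n * x - 3) * t^2 * (1 - t)^(n - 2)
       - (real n * x - 2) * t^3 * (1 - t)^(n - 3)
       + t powr (real n * x) * (1 - t) powr (real n * (1 - x)))
      / (1 - 2 * t)^2))"

end

theory Submission
  imports Defs
begin

lemma powr_bound_half2:
  fixes xi b :: real assumes "1/2 \<le> xi" "xi \<le> 2"
  shows "xi powr b \<le> 2 powr \<bar>b\<bar>"
proof -
  have xi: "xi > 0" using assms by auto
  have l1: "ln xi \<le> ln 2" using assms by auto
  have l2: "- ln 2 \<le> ln xi"
  proof -
    have "ln (1/2) \<le> ln xi" using assms by (subst ln_le_cancel_iff) auto
    thus ?thesis by (simp add: ln_div)
  qed
  have "b * ln xi \<le> \<bar>b\<bar> * ln 2"
  proof (cases "b \<ge> 0")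
    case True thus ?thesis using l1 by (simp add: mult_left_mono)
  next
    case False
    hence "b * ln xi \<le> b * (- ln 2)" using l2 by (intro mult_left_mono_neg) auto
    thus ?thesis using False by simp
  qed
  thus ?thesis using xi by (simp add: powr_def)
qed

lemma powr_taylor2:
  fixes a s :: real
  assumes "1/2 \<le> s" "s \<le> 2"
  shows "\<bar>s powr a - 1 - a*(s-1)\<bar> \<le> \<bar>a*(a-1)\<bar> * 2 powr \<bar>a-2\<bar> / 2 * (s-1)^2"
proof (cases "s = 1")
  case True thus ?thesis by simp
next
  case False
  define diff where "diff = (\<lambda>m::nat. \<lambda>y::real. if m = 0 then y powr a else if m = 1 then a * y powr (a-1) else a*(a-1)*y powr (a-2))"
  have D: "\<forall>m t. m < 2 \<and> 1/2 \<le> t \<and> t \<le> 2 \<longrightarrow> DERIV (diff m) t :> diff (Suc m) t"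
  proof (intro allI impI)
    fix m :: nat and t :: real assume h: "m < 2 \<and> 1/2 \<le> t \<and> t \<le> 2"
    hence t0: "t > 0" by auto
    show "DERIV (diff m) t :> diff (Suc m) t"
    proof (cases "m = 0")
      case True
      show ?thesis unfolding True diff_def using has_real_derivative_powr[OF t0, of a] by simp
    next
      case False
      hence m1: "m = 1" using h by auto
      have "DERIV (\<lambda>y. a * y powr (a-1)) t :> a * ((a-1) * t powr (a - 1 - 1))"
        by (intro DERIV_cmult has_real_derivative_powr t0)
      moreover have "diff m = (\<lambda>y. a * y powr (a-1))" unfolding diff_def m1 by auto
      ultimately show ?thesis unfolding m1 diff_def by (simp add: algebra_simps)
    qed
  qed
  obtain xi where xi: "(if s < 1 then s < xi \<and> xi < 1 else 1 < xi \<and> xi < s)"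
    and eq: "s powr a = (\<Sum>m<2. (diff m 1 / fact m) * (s - 1)^m) + (diff 2 xi / fact 2) * (s - 1)^2"
    using Taylor[of 2 diff "\<lambda>y. y powr a" "1/2" 2 1 s] D assms False unfolding diff_def by auto
  have xib: "1/2 \<le> xi" "xi \<le> 2" using xi assms by (auto split: if_splits)
  have eq2: "s powr a - 1 - a*(s-1) = a*(a-1)*xi powr (a-2) / 2 * (s-1)^2"
    using eq by (simp add: diff_def numeral_2_eq_2)
  have "\<bar>s powr a - 1 - a*(s-1)\<bar> = \<bar>a*(a-1)\<bar> * xi powr (a-2) / 2 * (s-1)^2"
    unfolding eq2 by (simp add: abs_mult)
  also have "\<dots> \<le> \<bar>a*(a-1)\<bar> * 2 powr \<bar>a-2\<bar> / 2 * (s-1)^2"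
    using powr_bound_half2[OF xib, of "a-2"]
    by (intro mult_right_mono divide_right_mono mult_left_mono) auto
  finally show ?thesis .
qed

lemma tri3:
  fixes A B p q r :: real
  assumes "0 \<le> p" "0 \<le> q" "0 \<le> r"
  shows "\<bar>A*p - B*q + r\<bar> \<le> \<bar>A\<bar>*p + \<bar>B\<bar>*q + r"
proof -
  have "\<bar>A*p\<bar> = \<bar>A\<bar>*p" "\<bar>B*q\<bar> = \<bar>B\<bar>*q" using assms by (simp_all add: abs_mult)
  thus ?thesis using assms by linarith
qed

lemma pow_split: "k \<le> n \<Longrightarrow> (u::real)^n = u^(n-k) * u^k"
  by (metis le_add_diff_inverse2 power_add)

definition F :: "nat \<Rightarrow> real \<Rightarrow> real \<Rightarrow> real" where
  "F n x t = (t^2 + (1 - t)^2) *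
     (((real n * x - 3) * t^2 * (1 - t)^(n - 2)
       - (real n * x - 2) * t^3 * (1 - t)^(n - 3)
       + t powr (real n * x) * (1 - t) powr (real n * (1 - x)))
      / (1 - 2 * t)^2)"

lemma Phi_F: "Phi n x = (real n + 1) * integral {0..1} (F n x)"
  unfolding Phi_def F_def by simp

definition CB :: "nat \<Rightarrow> real" where
  "CB n = 18 * (real n + 3) + 2 * (real n + 3)^2 * 2 powr (real n + 4)"

lemma F_bound:
  assumes n: "n \<ge> 3" and x: "0 \<le> x" "x \<le> 1" and t: "0 \<le> t" "t \<le> 1"
  shows "\<bar>F n x t\<bar> \<le> CB n"
proof -
  define u where "u = 1 - t"
  define w where "w = t^2 + u^2"
  define N where "N = (real n * x - 3) * t^2 * u^(n - 2) - (real n * x - 2) * t^3 * u^(n - 3)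
       + t powr (real n * x) * u powr (real n * (1 - x))"
  have u: "0 \<le> u" "u \<le> 1" using t by (auto simp: u_def)
  have w0: "0 \<le> w" unfolding w_def by simp
  have w1: "w \<le> 1"
  proof -
    have "w = 1 - 2 * t * u" unfolding w_def u_def by (simp add: power2_eq_square algebra_simps)
    thus ?thesis using t u by simp
  qed
  have Fe: "F n x t = w * (N / (1 - 2*t)^2)" unfolding F_def w_def N_def u_def by simp
  have nx: "0 \<le> real n * x" "real n * x \<le> real n" using x by (auto simp: mult_left_le)
  have CBpos: "18 * (real n + 3) \<le> CB n" unfolding CB_def by simp
  show ?thesis
  proof (cases "\<bar>1 - 2*t\<bar> \<ge> 1/3")
    case True
    have d: "(1 - 2*t)^2 \<ge> 1/9"
    proof -
      have "(1/3)^2 \<le> \<bar>1 - 2*t\<bar>^2" using True by (intro power_mono) auto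
      thus ?thesis by (simp add: power2_eq_square)
    qed
    have p1: "t^2 * u^(n-2) \<le> 1" using t u by (intro mult_le_one power_le_one) auto
    have p2: "t^3 * u^(n-3) \<le> 1" using t u by (intro mult_le_one power_le_one) auto
    have p3: "t powr (real n * x) \<le> 1"
    proof -
      have "t powr (real n * x) \<le> 1 powr (real n * x)" using t nx by (intro powr_mono2) auto
      thus ?thesis by simp
    qed
    have p4: "u powr (real n * (1 - x)) \<le> 1"
    proof -
      have "u powr (real n * (1-x)) \<le> 1 powr (real n * (1-x))" using u x by (intro powr_mono2) auto
      thus ?thesis by simp
    qed
    have "\<bar>N\<bar> \<le> \<bar>real n * x - 3\<bar> * (t^2 * u^(n - 2)) + \<bar>real n * x - 2\<bar> * (t^3 * u^(n - 3))
       + t powr (real n * x) * u powr (real n * (1 - x))"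
      unfolding N_def using t u by (simp add: mult.assoc tri3)
    also have "\<dots> \<le> (real n + 3) * 1 + (real n + 2) * 1 + 1 * 1"
      using p1 p2 p3 p4 nx t u
      by (intro add_mono mult_mono) auto
    finally have Nb: "\<bar>N\<bar> \<le> 2 * real n + 6" by simp
    have "\<bar>F n x t\<bar> = w * (\<bar>N\<bar> / (1 - 2*t)^2)" unfolding Fe using w0 by (simp add: abs_mult)
    also have "\<dots> \<le> 1 * ((2 * real n + 6) / (1/9))"
      using w0 w1 Nb d by (intro mult_mono frac_le) auto
    also have "\<dots> \<le> CB n" using CBpos by simp
    finally show ?thesis .
  next
    case False
    hence tb: "1/3 < t" "t < 2/3" by (auto simp: abs_real_def split: if_splits)
    show ?thesis
    proof (cases "t = 1/2")
      case True
      have "F n x t = 0" unfolding Fe using True by simp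
      thus ?thesis using CBpos by simp
    next
      case tne: False
      have t0: "t > 0" and u0: "u > 0" using tb by (auto simp: u_def)
      define s where "s = t / u"
      define a where "a = real n * x - 2"
      define R where "R = s powr a - 1 - a * (s - 1)"
      have s0: "s > 0" unfolding s_def using t0 u0 by simp
      have sb: "1/2 \<le> s" "s \<le> 2" unfolding s_def using tb u0 by (auto simp: field_simps u_def)
      have ts: "t = s * u" unfolding s_def using u0 by simp
      have e1: "t powr (real n * x) * u powr (real n * (1 - x)) = u^n * s^2 * s powr a"
      proof -
        have "s powr a * s^2 = s powr (a + 2)" using s0 by (simp add: powr_add powr_numeral)
        also have "a + 2 = real n * x" unfolding a_def by simp
        finally have A: "s powr a * s^2 = s powr (real n * x)" .
        have B: "t powr (real n * x) = s powr (real n * x) * u powr (real n * x)"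
          unfolding ts using s0 u0 by (simp add: powr_mult)
        have C: "u powr (real n * x) * u powr (real n * (1 - x)) = u^n"
        proof -
          have "u powr (real n * x) * u powr (real n * (1 - x)) = u powr (real n * x + real n * (1 - x))"
            by (simp add: powr_add)
          also have "real n * x + real n * (1 - x) = real n" by (simp add: algebra_simps)
          finally show ?thesis using u0 by (simp add: powr_realpow)
        qed
        have "t powr (real n * x) * u powr (real n * (1 - x)) = s powr (real n * x) * (u powr (real n * x) * u powr (real n * (1 - x)))"
          unfolding B by (simp add: mult.assoc)
        also have "\<dots> = s powr (real n * x) * u^n" unfolding C ..
        finally show ?thesis using A by (simp add: algebra_simps)
      qed
      have e2: "t^2 * u^(n-2) = u^n * s^2"
      proof -
        have "u^n = u^(n-2) * u^2" using n by (intro pow_split) auto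
        thus ?thesis unfolding ts by (simp add: power_mult_distrib)
      qed
      have e3: "t^3 * u^(n-3) = u^n * s^3"
      proof -
        have "u^n = u^(n-3) * u^3" using n by (intro pow_split) auto
        thus ?thesis unfolding ts by (simp add: power_mult_distrib)
      qed
      have N2: "N = (real n * x - 3) * (t^2 * u^(n - 2)) - (real n * x - 2) * (t^3 * u^(n - 3))
       + t powr (real n * x) * u powr (real n * (1 - x))" unfolding N_def by (simp add: mult.assoc)
      have Neq: "N = u^n * s^2 * R"
        unfolding N2 R_def e1 e2 e3 a_def by (simp add: algebra_simps power2_eq_square power3_eq_cube)
      have den: "(1 - 2*t)^2 = u^2 * (s - 1)^2"
      proof -
        have "1 - 2*t = u - t" unfolding u_def by simp
        also have "\<dots> = u * (1 - s)" using ts by (simp add: algebra_simps)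
        finally have "(1 - 2*t)^2 = (u * (1 - s))^2" by simp
        also have "\<dots> = u^2 * (s - 1)^2" by (simp add: power_mult_distrib power2_eq_square algebra_simps)
        finally show ?thesis .
      qed
      have sne: "s \<noteq> 1"
      proof
        assume "s = 1"
        hence "t = u" using ts by simp
        thus False using tne unfolding u_def by simp
      qed
      have Rb: "\<bar>R\<bar> \<le> \<bar>a*(a-1)\<bar> * 2 powr \<bar>a-2\<bar> / 2 * (s-1)^2"
        unfolding R_def using powr_taylor2[OF sb] .
      have "\<bar>F n x t\<bar> = w * u^(n-2) * s^2 * (\<bar>R\<bar> / (s-1)^2)"
      proof -
        have "u^n = u^(n-2) * u^2" using n by (intro pow_split) auto
        hence hu: "u^n = u^(n-2) * u^2" .
        have "\<bar>F n x t\<bar> = w * (\<bar>N\<bar> / (1-2*t)^2)" unfolding Fe using w0 by (simp add: abs_mult)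
        also have "\<dots> = w * ((u^(n-2) * s^2 * \<bar>R\<bar>) * u^2 / ((s-1)^2 * u^2))"
          unfolding Neq den hu using u0 s0 by (simp add: abs_mult mult_ac)
        also have "\<dots> = w * ((u^(n-2) * s^2 * \<bar>R\<bar>) / (s-1)^2)"
          using u0 by (subst mult_divide_mult_cancel_right) auto
        finally show ?thesis by simp
      qed
      also have "\<dots> \<le> 1 * 1 * 4 * (\<bar>a*(a-1)\<bar> * 2 powr \<bar>a-2\<bar> / 2)"
      proof (intro mult_mono)
        show "\<bar>R\<bar> / (s-1)^2 \<le> \<bar>a*(a-1)\<bar> * 2 powr \<bar>a-2\<bar> / 2"
          using Rb sne by (simp add: divide_le_eq)
        show "u^(n-2) \<le> 1" using u by (simp add: power_le_one)
        show "s^2 \<le> 4" using sb s0 power_mono[of s 2 2] by simp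
      qed (use w0 w1 u s0 in auto)
      also have "\<dots> \<le> 2 * ((real n + 3)^2 * 2 powr (real n + 4))"
      proof -
        have "\<bar>a*(a-1)\<bar> \<le> (real n + 3)^2"
        proof -
          have "\<bar>a\<bar> \<le> real n + 3" "\<bar>a - 1\<bar> \<le> real n + 3" unfolding a_def using nx by auto
          hence "\<bar>a\<bar> * \<bar>a - 1\<bar> \<le> (real n + 3) * (real n + 3)" by (intro mult_mono) auto
          thus ?thesis by (simp add: abs_mult power2_eq_square)
        qed
        moreover have "2 powr \<bar>a-2\<bar> \<le> 2 powr (real n + 4)"
          unfolding a_def using nx by (intro powr_mono) auto
        ultimately have "\<bar>a*(a-1)\<bar> * 2 powr \<bar>a-2\<bar> \<le> (real n + 3)^2 * 2 powr (real n + 4)"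
          by (intro mult_mono) auto
        thus ?thesis by simp
      qed
      also have "\<dots> \<le> CB n" unfolding CB_def by simp
      finally show ?thesis .
    qed
  qed
qed

lemma F_meas: "F n x \<in> borel_measurable borel"
  unfolding F_def by measurable

lemma F_meas': "F n x \<in> borel_measurable (lebesgue_on {0..1})"
  using F_meas by (simp add: measurable_completion measurable_restrict_space1)

lemma F_integrable:
  assumes "n \<ge> 3" "0 \<le> x" "x \<le> 1"
  shows "F n x integrable_on {0..1}"
  by (rule measurable_bounded_by_integrable_imp_integrable_real[where g = "\<lambda>_. CB n"])
     (use F_meas' F_bound assms in auto)

lemma E_convex:
  fixes t l x y :: real
  assumes t: "0 \<le> t" "t \<le> 1" and l: "0 \<le> l" "l \<le> 1"
  shows "t powr (real n * ((1-l)*x + l*y)) * (1-t) powr (real n * (1 - ((1-l)*x + l*y)))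
    \<le> (1-l) * (t powr (real n * x) * (1-t) powr (real n * (1 - x)))
      + l * (t powr (real n * y) * (1-t) powr (real n * (1 - y)))"
proof (cases "t = 0 \<or> t = 1")
  case True thus ?thesis by auto
next
  case False
  hence t0: "t > 0" "1 - t > 0" using t by auto
  define L where "L = (\<lambda>z. real n * z * ln t + real n * (1 - z) * ln (1-t))"
  have E: "t powr (real n * z) * (1-t) powr (real n * (1 - z)) = exp (L z)" for z
    unfolding L_def powr_def using t0 by (simp add: exp_add mult_ac)
  have "L ((1-l)*x + l*y) = (1-l) * L x + l * L y" unfolding L_def by (simp add: algebra_simps)
  hence "exp (L ((1-l)*x + l*y)) \<le> (1-l) * exp (L x) + l * exp (L y)"
    using convex_onD[OF exp_convex, of l "L x" "L y"] l by simp
  thus ?thesis unfolding E .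
qed

lemma F_convex_pt:
  assumes t: "0 \<le> t" "t \<le> 1" and l: "0 \<le> l" "l \<le> 1"
  shows "F n ((1-l)*x + l*y) t \<le> (1-l) * F n x t + l * F n y t"
proof -
  define c where "c = (t^2 + (1-t)^2) / (1 - 2*t)^2"
  define p where "p = t^2 * (1 - t)^(n - 2)"
  define q where "q = t^3 * (1 - t)^(n - 3)"
  define E where "E = (\<lambda>z. t powr (real n * z) * (1-t) powr (real n * (1 - z)))"
  have c0: "c \<ge> 0" unfolding c_def by simp
  have Fe: "F n z t = c * ((real n * z - 3) * p - (real n * z - 2) * q + E z)" for z
    unfolding F_def c_def p_def q_def E_def by (simp add: mult_ac)
  have "E ((1-l)*x + l*y) \<le> (1-l) * E x + l * E y" unfolding E_def by (rule E_convex[OF t l])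
  hence "c * E ((1-l)*x + l*y) \<le> c * ((1-l) * E x + l * E y)" using c0 by (rule mult_left_mono)
  moreover have "c * ((real n * ((1-l)*x + l*y) - 3) * p - (real n * ((1-l)*x + l*y) - 2) * q)
     = (1-l) * (c * ((real n * x - 3) * p - (real n * x - 2) * q)) + l * (c * ((real n * y - 3) * p - (real n * y - 2) * q))"
    by (simp add: algebra_simps)
  ultimately show ?thesis unfolding Fe by (simp add: algebra_simps)
qed

lemma Phi_convex:
  assumes n: "n \<ge> 3"
  shows "convex_on {0..1} (Phi n)"
proof (rule convex_onI)
  fix l x y :: real
  assume l: "0 < l" "l < 1" and x: "x \<in> {0..1}" and y: "y \<in> {0..1}"
  have z: "0 \<le> (1-l)*x + l*y" "(1-l)*x + l*y \<le> 1"
    using l x y convex_bound_le[of x 1 y "1-l" l] by auto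
  have ix: "F n x integrable_on {0..1}" and iy: "F n y integrable_on {0..1}"
    and iz: "F n ((1-l)*x + l*y) integrable_on {0..1}"
    using F_integrable n x y z by auto
  have "integral {0..1} (F n ((1-l)*x + l*y)) \<le> integral {0..1} (\<lambda>t. (1-l) * F n x t + l * F n y t)"
  proof (rule integral_le[OF iz])
    show "(\<lambda>t. (1-l) * F n x t + l * F n y t) integrable_on {0..1}"
      using integrable_cmul[OF ix, of "1-l"] integrable_cmul[OF iy, of l] by (intro integrable_add) auto
  qed (auto intro: F_convex_pt simp: less_imp_le l)
  also have "\<dots> = (1-l) * integral {0..1} (F n x) + l * integral {0..1} (F n y)"
  proof -
    have a1: "(\<lambda>t. (1-l)*F n x t) integrable_on {0..1}" using integrable_cmul[OF ix, of "1-l"] by simp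
    have a2: "(\<lambda>t. l*F n y t) integrable_on {0..1}" using integrable_cmul[OF iy, of "l"] by simp
    have b1: "integral {0..1} (\<lambda>t. (1-l)*F n x t) = (1-l) * integral {0..1} (F n x)"
      by (rule integral_mult[OF ix, symmetric])
    have b2: "integral {0..1} (\<lambda>t. l*F n y t) = l * integral {0..1} (F n y)"
      by (rule integral_mult[OF iy, symmetric])
    show ?thesis using integral_add[OF a1 a2] unfolding b1 b2 .
  qed
  finally have "integral {0..1} (F n ((1-l)*x + l*y)) \<le> (1-l) * integral {0..1} (F n x) + l * integral {0..1} (F n y)" .
  hence "(real n + 1) * integral {0..1} (F n ((1-l)*x + l*y)) \<le> (real n + 1) * ((1-l) * integral {0..1} (F n x) + l * integral {0..1} (F n y))"
    by (intro mult_left_mono) auto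
  thus "Phi n ((1 - l) *\<^sub>R x + l *\<^sub>R y) \<le> (1 - l) * Phi n x + l * Phi n y"
    unfolding Phi_F by (simp add: distrib_left mult.left_commute)
qed simp

lemma beta_nat:
  "((\<lambda>t::real. t^p * (1-t)^q) has_integral (fact p * fact q / fact (p+q+1))) {0..1}"
proof -
  have h: "((\<lambda>t. t powr (real (p+1) - 1) * (1 - t) powr (real (q+1) - 1)) has_integral Beta (real (p+1)) (real (q+1))) {0..1}"
    by (rule has_integral_Beta_real) auto
  have G: "Gamma (real k + 1) = fact k" for k
    using Gamma_fact[of k] by (simp add: add.commute)
  have "Beta (real (p+1)) (real (q+1)) = fact p * fact q / fact (p+q+1)"
    unfolding Beta_altdef rGamma_inverse_Gamma
    using G[of p] G[of q] G[of "p+q+1"] by (simp add: field_simps add_ac)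
  with h have h2: "((\<lambda>t. t powr (real (p+1) - 1) * (1 - t) powr (real (q+1) - 1)) has_integral (fact p * fact q / fact (p+q+1))) {0..1}"
    by simp
  show ?thesis
    by (rule has_integral_spike_finite[OF _ _ h2, of "{0,1}"]) (auto simp: powr_realpow)
qed

lemma beta_nat_int:
  "integral {0..1::real} (\<lambda>t. t^p * (1-t)^q) = fact p * fact q / fact (p+q+1)"
  using beta_nat by (rule integral_unique)

lemma fact_mul_le_aux:
  "c \<le> a \<Longrightarrow> a \<le> b \<Longrightarrow> fact a * fact b \<le> (fact c * fact (a + b - c) :: nat)"
proof (induction a arbitrary: b)
  case 0 thus ?case by simp
next
  case (Suc a)
  show ?case
  proof (cases "c = Suc a")
    case True thus ?thesis by simp
  next
    case False
    hence ca: "c \<le> a" using Suc.prems by simp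
    have "fact (Suc a) * fact b = Suc a * (fact a * fact b)" by (simp only: fact_Suc mult.assoc of_nat_id)
    also have "\<dots> \<le> Suc b * (fact a * fact b)" using Suc.prems by (intro mult_right_mono) auto
    also have "\<dots> = fact a * fact (Suc b)" by (simp add: fact_Suc algebra_simps)
    also have "\<dots> \<le> fact c * fact (a + Suc b - c)" using Suc.prems ca by (intro Suc.IH) auto
    also have "a + Suc b - c = Suc a + b - c" by simp
    finally show ?thesis .
  qed
qed

lemma fact_mul_le:
  "c \<le> a \<Longrightarrow> c \<le> b \<Longrightarrow> fact a * fact b \<le> (fact c * fact (a + b - c) :: nat)"
  using fact_mul_le_aux[of c a b] fact_mul_le_aux[of c b a]
  by (cases "a \<le> b") (auto simp: add.commute mult.commute)

lemma divb:
  fixes X k c f :: real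
  assumes "X \<le> k * f" "c > 0" "f > 0"
  shows "X / (c * f) \<le> k / c"
proof -
  have "X / (c * f) \<le> (k * f) / (c * f)" using assms by (intro divide_right_mono) auto
  also have "\<dots> = k / c" using assms by simp
  finally show ?thesis .
qed

lemma term_le_fact: "k * fact k \<le> (fact (Suc k) :: nat)"
  by (simp add: fact_Suc)

lemma T1:
  assumes "j < L"
  shows "real (L-j) * fact (j+2) * fact (L-j) / fact (L+3) \<le> 2 / ((real L + 3) * (real L + 2))"
proof -
  have "(L-j) * fact (L-j) * fact (j+2) \<le> fact (Suc (L-j)) * (fact (j+2) :: nat)"
    by (intro mult_right_mono term_le_fact) auto
  also have "\<dots> = fact (j+2) * fact (Suc (L-j))" by simp
  also have "\<dots> \<le> fact 2 * fact (j + 2 + Suc (L-j) - 2)" using assms by (intro fact_mul_le) auto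
  also have "j + 2 + Suc (L-j) - 2 = L + 1" using assms by simp
  finally have A: "(L-j) * fact (L-j) * fact (j+2) \<le> 2 * (fact (L+1) :: nat)" by simp
  have A': "real (L-j) * fact (j+2) * fact (L-j) \<le> 2 * fact (L+1)"
    using A by (metis (mono_tags, lifting) of_nat_fact of_nat_le_iff of_nat_mult of_nat_numeral mult.assoc mult.commute)
  have F3: "(fact (L+3) :: real) = (real L + 3) * (real L + 2) * fact (L+1)"
    by (simp add: fact_Suc numeral_3_eq_3 numeral_2_eq_2 algebra_simps)
  have pos: "(0::real) < fact (L+1)" by simp
  show ?thesis unfolding F3 by (rule divb[OF A' _ pos]) auto
qed

lemma T2:
  assumes "1 \<le> j" "j + 2 \<le> L"
  shows "real (L-j) * fact (j+2) * fact (L-j) / fact (L+3) \<le> 6 / ((real L + 3) * (real L + 2) * (real L + 1))"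
proof -
  have "(L-j) * fact (L-j) * fact (j+2) \<le> fact (Suc (L-j)) * (fact (j+2) :: nat)"
    by (intro mult_right_mono term_le_fact) auto
  also have "\<dots> = fact (j+2) * fact (Suc (L-j))" by simp
  also have "\<dots> \<le> fact 3 * fact (j + 2 + Suc (L-j) - 3)" using assms by (intro fact_mul_le) auto
  also have "j + 2 + Suc (L-j) - 3 = L" using assms by simp
  finally have A: "(L-j) * fact (L-j) * fact (j+2) \<le> 6 * (fact L :: nat)" by (simp add: numeral_3_eq_3)
  have A': "real (L-j) * fact (j+2) * fact (L-j) \<le> 6 * fact L"
    using A by (metis (mono_tags, lifting) of_nat_fact of_nat_le_iff of_nat_mult of_nat_numeral mult.assoc mult.commute)
  have F3: "(fact (L+3) :: real) = (real L + 3) * (real L + 2) * (real L + 1) * fact L"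
    by (simp add: fact_Suc numeral_3_eq_3 algebra_simps)
  have pos: "(0::real) < fact L" by simp
  show ?thesis unfolding F3 by (rule divb[OF A' _ pos]) auto
qed

lemma sum_T:
  assumes "L \<ge> 1"
  shows "(\<Sum>j<L. real (L-j) * fact (j+2) * fact (L-j) / fact (L+3))
    \<le> 4 / ((real L + 3) * (real L + 2)) + 6 * (real L - 1) / ((real L + 3) * (real L + 2) * (real L + 1))"
proof -
  obtain K where L: "L = Suc K" using assms by (cases L) auto
  define f where "f = (\<lambda>j. real (L-j) * fact (j+2) * fact (L-j) / fact (L+3) :: real)"
  define D2 where "D2 = 2 / ((real L + 3) * (real L + 2))"
  define D3 where "D3 = 6 / ((real L + 3) * (real L + 2) * (real L + 1))"
  have D2: "D2 \<ge> 0" unfolding D2_def by simp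
  have "(\<Sum>j<L. f j) = f 0 + (\<Sum>j<K. f (Suc j))" unfolding L by (rule sum.lessThan_Suc_shift)
  also have "\<dots> \<le> D2 + (\<Sum>j<K. D3 + (if j = K - 1 then D2 else 0))"
  proof (rule add_mono)
    show "f 0 \<le> D2" unfolding f_def D2_def using T1[of 0 L] L by simp
    show "(\<Sum>j<K. f (Suc j)) \<le> (\<Sum>j<K. D3 + (if j = K - 1 then D2 else 0))"
    proof (rule sum_mono)
      fix j assume j: "j \<in> {..<K}"
      have D3: "D3 \<ge> 0" unfolding D3_def by simp
      show "f (Suc j) \<le> D3 + (if j = K - 1 then D2 else 0)"
      proof (cases "j = K - 1")
        case True
        have "f (Suc j) \<le> D2" unfolding f_def D2_def using T1[of "Suc j" L] L j by simp
        thus ?thesis using True D3 by simp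
      next
        case False
        have "f (Suc j) \<le> D3" unfolding f_def D3_def using T2[of "Suc j" L] L j False by simp
        thus ?thesis using False by simp
      qed
    qed
  qed
  also have "\<dots> \<le> D2 + (real K * D3 + D2)"
    using sum.delta[of "{..<K}" "K - 1" "\<lambda>_. D2"] D2 by (simp add: sum.distrib L)
  finally show ?thesis unfolding f_def D2_def D3_def L by (simp add: field_simps)
qed

lemma integral_F_spike:
  assumes "\<And>t. 0 < t \<Longrightarrow> t < 1 \<Longrightarrow> t \<noteq> 1/2 \<Longrightarrow> F n x t = g t"
  shows "integral {0..1} (F n x) = integral {0..1} g"
  by (rule integral_spike[of "{0,1/2,1}"]) (use assms in \<open>auto simp: negligible_finite\<close>)

lemma Phi_2: assumes n: "n \<ge> 3" shows "Phi n (2 / real n) = 0"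
proof -
  have "integral {0..1} (F n (2 / real n)) = integral {0..1} (\<lambda>_::real. 0::real)"
  proof (rule integral_F_spike)
    fix t :: real assume t: "0 < t" "t < 1" "t \<noteq> 1/2"
    have a: "real n * (2 / real n) = 2" using n by simp
    have b: "real n * (1 - 2 / real n) = real (n - 2)" using n by (simp add: algebra_simps of_nat_diff)
    have "t powr 2 = t^2" using t by (simp add: powr_realpow)
    moreover have "(1-t) powr real (n-2) = (1-t)^(n-2)" using t by (simp add: powr_realpow)
    ultimately show "F n (2 / real n) t = 0" unfolding F_def a b by simp
  qed
  thus ?thesis unfolding Phi_F by simp
qed

lemma Phi_3: assumes n: "n \<ge> 3" shows "Phi n (3 / real n) = 0"
proof -
  have "integral {0..1} (F n (3 / real n)) = integral {0..1} (\<lambda>_::real. 0::real)"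
  proof (rule integral_F_spike)
    fix t :: real assume t: "0 < t" "t < 1" "t \<noteq> 1/2"
    have a: "real n * (3 / real n) = 3" using n by simp
    have b: "real n * (1 - 3 / real n) = real (n - 3)" using n by (simp add: algebra_simps of_nat_diff)
    have "t powr 3 = t^3" using t by (simp add: powr_realpow)
    moreover have "(1-t) powr real (n-3) = (1-t)^(n-3)" using t by (simp add: powr_realpow)
    ultimately show "F n (3 / real n) t = 0" unfolding F_def a b by simp
  qed
  thus ?thesis unfolding Phi_F by simp
qed

lemma aux1:
  fixes r :: real assumes r: "r \<ge> 0"
  shows "(r + 3 + 1) * (6 / ((r + 4) * (r + 3) * (r + 2) * (r + 1)) + 1 / ((r + 4) * (r + 3)))
     = 1 / (r + 3) + 6 / ((r + 3) * (r + 3 - 1) * (r + 3 - 2))"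
proof -
  have d: "r + 3 - 1 = r + 2" "r + 3 - 2 = r + 1" "r + 3 + 1 = r + 4" by simp_all
  have p: "r + 1 > 0" "r + 2 > 0" "r + 3 > 0" "r + 4 > 0" using r by auto
  have g: "\<And>a b c e :: real. a > 0 \<Longrightarrow> b > 0 \<Longrightarrow> c > 0 \<Longrightarrow> e > 0 \<Longrightarrow>
     e * (6 / (e * c * b * a) + 1 / (e * c)) = 1 / c + 6 / (c * b * a)"
    by (simp add: field_simps)
  show ?thesis unfolding d using g[OF p(1) p(2) p(3) p(4)] .
qed

lemma Phi_1: assumes n: "n \<ge> 3" shows "Phi n (1 / real n) = 1 / real n + 6 / (real n * (real n - 1) * (real n - 2))"
proof -
  have "integral {0..1} (F n (1 / real n)) = integral {0..1} (\<lambda>t. t^3 * (1-t)^(n-3) + t^1 * (1-t)^(n-1))"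
  proof (rule integral_F_spike)
    fix t :: real assume t: "0 < t" "t < 1" "t \<noteq> 1/2"
    define u where "u = 1 - t"
    have a: "real n * (1 / real n) = 1" using n by simp
    have b: "real n * (1 - 1 / real n) = real (n - 1)" using n by (simp add: algebra_simps of_nat_diff)
    have c: "t powr 1 = t" using t by simp
    have f: "u^(n-1) = u^2 * u^(n-3)"
    proof -
      have "n - 1 - 2 = n - 3" by simp
      thus ?thesis using n pow_split[of 2 "n-1" u] by (simp add: mult.commute)
    qed
    have d: "(1-t) powr real (n-1) = u^2 * u^(n-3)" unfolding f[symmetric] unfolding u_def using t
      by (simp add: powr_realpow)
    have e: "u^(n-2) = u * u^(n-3)" using n pow_split[of 1 "n-2" u] by (simp add: mult.commute)
    have g: "1 - 2*t = u - t" unfolding u_def by simp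
    have h: "(1 - 2*t)^2 \<noteq> 0" using t by simp
    have "F n (1 / real n) t = (t^2 + u^2) * (((-2) * t^2 * (u * u^(n-3)) - (-1) * t^3 * u^(n-3) + t * (u^2 * u^(n-3))) / (1 - 2*t)^2)"
      unfolding F_def a b c d using e by (simp add: u_def)
    also have "\<dots> = (t^2 + u^2) * ((t * u^(n-3) * (1 - 2*t)^2) / (1 - 2*t)^2)"
      unfolding g by (simp add: algebra_simps power2_eq_square power3_eq_cube)
    also have "\<dots> = (t^2 + u^2) * (t * u^(n-3))" using h by simp
    also have "\<dots> = t^3 * u^(n-3) + t^1 * u^(n-1)"
      unfolding f by (simp add: algebra_simps power2_eq_square power3_eq_cube)
    finally show "F n (1 / real n) t = t^3 * (1-t)^(n-3) + t^1 * (1-t)^(n-1)" unfolding u_def .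
  qed
  also have "\<dots> = fact 3 * fact (n-3) / fact (3 + (n-3) + 1) + fact 1 * fact (n-1) / fact (1 + (n-1) + 1)"
    using integral_add[OF has_integral_integrable[OF beta_nat[of 3 "n-3"]] has_integral_integrable[OF beta_nat[of 1 "n-1"]]]
    by (simp only: beta_nat_int)
  finally have I: "integral {0..1} (F n (1 / real n)) = fact 3 * fact (n-3) / fact (3 + (n-3) + 1) + fact 1 * fact (n-1) / fact (1 + (n-1) + 1)" .
  obtain m where m: "n = m + 3" using n by (metis add.commute le_Suc_ex)
  have "(real n + 1) * (fact 3 * fact (n-3) / fact (3 + (n-3) + 1) + fact 1 * fact (n-1) / fact (1 + (n-1) + 1))
        = 1 / real n + 6 / (real n * (real n - 1) * (real n - 2))"
  proof -
    have e: "n - 3 = m" "n - 1 = Suc (Suc m)" using m by auto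
    have e2: "3 + m + 1 = Suc (Suc (Suc (Suc m)))" "1 + Suc (Suc m) + 1 = Suc (Suc (Suc (Suc m)))" by auto
    have f4: "(fact (Suc (Suc (Suc (Suc m)))) :: real) = (real m + 4) * (real m + 3) * (real m + 2) * (real m + 1) * fact m"
      by (simp add: fact_Suc algebra_simps)
    have f2: "(fact (Suc (Suc m)) :: real) = (real m + 2) * (real m + 1) * fact m"
      by (simp add: fact_Suc algebra_simps)
    have fm: "(fact m :: real) > 0" by simp
    have rn: "real n = real m + 3" using m by simp
    have A1: "(fact 3 * fact (n-3) / fact (3 + (n-3) + 1) :: real) = 6 / ((real m + 4) * (real m + 3) * (real m + 2) * (real m + 1))"
      unfolding e unfolding e2 unfolding f4 using fm by (simp add: fact_numeral)
    have A2: "(fact 1 * fact (n-1) / fact (1 + (n-1) + 1) :: real) = 1 / ((real m + 4) * (real m + 3))"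
      unfolding e unfolding e2 unfolding f4 f2 using fm by simp
    show ?thesis unfolding A1 A2 rn by (rule aux1) simp
  qed
  thus ?thesis unfolding Phi_F I .
qed

definition Gs :: "nat \<Rightarrow> real \<Rightarrow> real \<Rightarrow> real" where
  "Gs L t u = (\<Sum>j<L. real (L-j) * t^(j+2) * u^(L-j))"

lemma Gs_rec: "Gs (Suc L) t u = real (Suc L) * t^2 * u^(Suc L) + t * Gs L t u"
  unfolding Gs_def by (subst sum.lessThan_Suc_shift) (simp add: sum_distrib_left mult_ac power2_eq_square)

lemma Gs_id: "(u - t)^2 * Gs L t u = real L * t^2 * u^(L+2) - real (L+1) * t^3 * u^(L+1) + t^(L+3) * u"
proof (induction L)
  case 0 thus ?case by (simp add: Gs_def power3_eq_cube)
next
  case (Suc L)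
  have "(u - t)^2 * Gs (Suc L) t u = real (Suc L) * t^2 * u^(Suc L) * (u - t)^2 + t * ((u - t)^2 * Gs L t u)"
    unfolding Gs_rec by (simp add: algebra_simps)
  also have "\<dots> = real (Suc L) * t^2 * u^(Suc L) * (u - t)^2 + t * (real L * t^2 * u^(L+2) - real (L+1) * t^3 * u^(L+1) + t^(L+3) * u)"
    unfolding Suc.IH ..
  also have "\<dots> = real (Suc L) * t^2 * u^(Suc L + 2) - real (Suc L + 1) * t^3 * u^(Suc L + 1) + t^(Suc L + 3) * u"
    by (simp add: power_add algebra_simps power2_eq_square power3_eq_cube power4_eq_xxxx)
  finally show ?case .
qed

lemma Gs_nonneg: "0 \<le> t \<Longrightarrow> 0 \<le> u \<Longrightarrow> 0 \<le> Gs L t u"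
  unfolding Gs_def by (intro sum_nonneg) auto

lemma Gs_integral:
  "((\<lambda>t. Gs L t (1-t)) has_integral (\<Sum>j<L. real (L-j) * fact (j+2) * fact (L-j) / fact (L+3))) {0..1}"
  unfolding Gs_def
proof (rule has_integral_sum)
  fix j assume j: "j \<in> {..<L}"
  have eq: "j + 2 + (L-j) + 1 = L + 3" using j by simp
  have "((\<lambda>t. real (L-j) * (t^(j+2) * (1-t)^(L-j))) has_integral real (L-j) * (fact (j+2) * fact (L-j) / fact (j + 2 + (L-j) + 1))) {0..1}"
    by (intro has_integral_mult_right beta_nat)
  then show "((\<lambda>t. real (L-j) * t^(j+2) * (1-t)^(L-j)) has_integral real (L-j) * fact (j+2) * fact (L-j) / fact (L+3)) {0..1}"
    unfolding eq by (simp only: mult.assoc times_divide_eq_right)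
qed simp

lemma final_ineq:
  fixes r :: real assumes r: "r \<ge> 1"
  shows "(r + 5) * (4 / ((r + 3) * (r + 2)) + 6 * (r - 1) / ((r + 3) * (r + 2) * (r + 1))) \<le> 16 / (r + 4)"
proof -
  have p: "r + 1 > 0" "r + 2 > 0" "r + 3 > 0" "r + 4 > 0" using r by auto
  have e: "4 / ((r + 3) * (r + 2)) + 6 * (r - 1) / ((r + 3) * (r + 2) * (r + 1)) = (10 * r - 2) / ((r + 3) * (r + 2) * (r + 1))"
  proof -
    have g: "\<And>a b c X :: real. a > 0 \<Longrightarrow> b > 0 \<Longrightarrow> c > 0 \<Longrightarrow> 4 / (c * b) + X / (c * b * a) = (4 * a + X) / (c * b * a)"
      by (simp add: field_simps)
    have "4 * (r + 1) + 6 * (r - 1) = 10 * r - 2" by simp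
    thus ?thesis using g[OF p(1) p(2) p(3), of "6 * (r - 1)"] by simp
  qed
  have c: "r^3 \<ge> r" using r by (metis le_add_same_cancel1 less_one not_less power3_eq_cube mult_le_cancel_left1 order_trans power_increasing zero_le_one power_one_right numeral_le_iff one_le_numeral semiring_norm(70) zero_less_one_class.zero_le_one)
  have key: "(r + 5) * (10 * r - 2) * (r + 4) \<le> 16 * ((r + 3) * (r + 2) * (r + 1))"
  proof -
    have "16 * ((r + 3) * (r + 2) * (r + 1)) - (r + 5) * (10 * r - 2) * (r + 4) = 6 * r^3 + 8 * r^2 - 6 * r + 136"
      by (simp add: algebra_simps power2_eq_square power3_eq_cube)
    moreover have "6 * r^3 + 8 * r^2 - 6 * r + 136 \<ge> 0" 
    proof -
      have "0 \<le> r^2" by simp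
      thus ?thesis using c by linarith
    qed
    ultimately show ?thesis by linarith
  qed
  have "(r + 5) * ((10 * r - 2) / ((r + 3) * (r + 2) * (r + 1))) = ((r + 5) * (10 * r - 2) * (r + 4)) / ((r + 3) * (r + 2) * (r + 1) * (r + 4))"
    using p by (subst mult_divide_mult_cancel_right) auto
  also have "\<dots> \<le> (16 * ((r + 3) * (r + 2) * (r + 1))) / ((r + 3) * (r + 2) * (r + 1) * (r + 4))"
    using key p by (intro divide_right_mono) auto
  also have "\<dots> = 16 / (r + 4)"
  proof -
    have g2: "\<And>D c :: real. D > 0 \<Longrightarrow> c > 0 \<Longrightarrow> (16 * D) / (D * c) = 16 / c" by simp
    show ?thesis by (rule g2) (use p in auto)
  qed
  finally show ?thesis unfolding e .
qed

lemma Phi_last: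
  assumes n: "n \<ge> 5"
  shows "Phi n (1 - 1 / real n) \<le> 16 / real n"
proof -
  define L where "L = n - 4"
  have L1: "L \<ge> 1" and nL: "n = L + 4" using n by (auto simp: L_def)
  have "integral {0..1} (F n (1 - 1 / real n)) = integral {0..1} (\<lambda>t. (t^2 + (1-t)^2) * Gs L t (1-t))"
  proof (rule integral_F_spike)
    fix t :: real assume t: "0 < t" "t < 1" "t \<noteq> 1/2"
    define u where "u = 1 - t"
    have a: "real n * (1 - 1 / real n) = real (L + 3)" using n unfolding nL by (simp add: field_simps)
    have b: "real n * (1 - (1 - 1 / real n)) = 1" using n by simp
    have c: "t powr real (L+3) = t^(L+3)" by (rule powr_realpow) (use t in auto)
    have d: "(1-t) powr 1 = 1 - t" using t by simp
    have e: "n - 2 = L + 2" "n - 3 = L + 1" unfolding nL by simp_all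
    have g: "1 - 2*t = u - t" unfolding u_def by simp
    have h: "(u - t)^2 \<noteq> 0" using t unfolding u_def by simp
    have "F n (1 - 1 / real n) t = (t^2 + u^2) * ((real L * t^2 * u^(L+2) - real (L+1) * t^3 * u^(L+1) + t^(L+3) * u) / (u - t)^2)"
      unfolding F_def a b c d e g[symmetric] by (simp add: u_def)
    also have "\<dots> = (t^2 + u^2) * Gs L t u" unfolding Gs_id[symmetric] using h by simp
    finally show "F n (1 - 1 / real n) t = (t^2 + (1-t)^2) * Gs L t (1-t)" unfolding u_def .
  qed
  also have "\<dots> \<le> integral {0..1} (\<lambda>t. Gs L t (1-t))"
  proof (rule integral_le)
    show "(\<lambda>t. (t^2 + (1-t)^2) * Gs L t (1-t)) integrable_on {0..1}"
      unfolding Gs_def by (intro integrable_continuous_interval continuous_intros)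
    show "(\<lambda>t. Gs L t (1-t)) integrable_on {0..1}"
      unfolding Gs_def by (intro integrable_continuous_interval continuous_intros)
    fix t :: real assume t: "t \<in> {0..1}"
    have w1: "t^2 + (1-t)^2 \<le> 1"
    proof -
      have "t^2 + (1-t)^2 = 1 - 2 * t * (1-t)" by (simp add: power2_eq_square algebra_simps)
      thus ?thesis using t by simp
    qed
    have "0 \<le> Gs L t (1-t)" using t by (intro Gs_nonneg) auto
    thus "(t^2 + (1-t)^2) * Gs L t (1-t) \<le> Gs L t (1-t)" using w1 by (simp add: mult_left_le_one_le)
  qed
  also have "\<dots> = (\<Sum>j<L. real (L-j) * fact (j+2) * fact (L-j) / fact (L+3))"
    by (rule integral_unique[OF Gs_integral])
  also have "\<dots> \<le> 4 / ((real L + 3) * (real L + 2)) + 6 * (real L - 1) / ((real L + 3) * (real L + 2) * (real L + 1))"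
    by (rule sum_T[OF L1])
  finally have I: "integral {0..1} (F n (1 - 1 / real n)) \<le> 4 / ((real L + 3) * (real L + 2)) + 6 * (real L - 1) / ((real L + 3) * (real L + 2) * (real L + 1))" .
  have "Phi n (1 - 1 / real n) \<le> (real L + 5) * (4 / ((real L + 3) * (real L + 2)) + 6 * (real L - 1) / ((real L + 3) * (real L + 2) * (real L + 1)))"
    unfolding Phi_F using I by (simp add: nL mult_left_mono add.commute add.left_commute)
  also have "\<dots> \<le> 16 / (real L + 4)" using L1 by (intro final_ineq) simp
  finally show ?thesis by (simp add: nL add.commute)
qed

lemma chord:
  assumes f: "convex_on {0..1} f" and abc: "0 \<le> a" "a < b" "b < c" "c \<le> (1::real)"
  shows "(c - a) * f b \<le> (c - b) * f a + (b - a) * f c"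
proof -
  define l where "l = (b - a) / (c - a)"
  have ca: "c - a > 0" using abc by simp
  have l: "0 \<le> l" "l \<le> 1" unfolding l_def using abc by auto
  have lc: "l * (c - a) = b - a" unfolding l_def using ca by simp
  have bl: "b = (1 - l) * a + l * c"
  proof -
    have "(1 - l) * a + l * c = a + l * (c - a)" by (simp add: algebra_simps)
    thus ?thesis unfolding lc by simp
  qed
  have "f b \<le> (1 - l) * f a + l * f c"
    using convex_onD[OF f l, of a c] abc unfolding bl by auto
  hence "(c - a) * f b \<le> (c - a) * ((1 - l) * f a + l * f c)" using ca by (intro mult_left_mono) auto
  also have "\<dots> = ((c - a) - l * (c - a)) * f a + (l * (c - a)) * f c" by (simp add: algebra_simps)
  also have "\<dots> = (c - b) * f a + (b - a) * f c" unfolding lc by simp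
  finally show ?thesis .
qed

lemma Phi1_bounds:
  assumes n: "n \<ge> 3"
  shows "0 \<le> Phi n (1 / real n)" "Phi n (1 / real n) \<le> 4 / real n"
proof -
  have N: "real n \<ge> 3" using n by simp
  have p: "real n * (real n - 1) * (real n - 2) > 0" using N by simp
  show "0 \<le> Phi n (1 / real n)" unfolding Phi_1[OF n] using p N by simp
  have "2 \<le> (real n - 1) * (real n - 2)"
  proof -
    have "(2::real) * 1 \<le> (real n - 1) * (real n - 2)" using N by (intro mult_mono) auto
    thus ?thesis by simp
  qed
  hence "6 / (real n * (real n - 1) * (real n - 2)) \<le> 3 / real n"
    using N p by (simp add: field_simps)
  thus "Phi n (1 / real n) \<le> 4 / real n" unfolding Phi_1[OF n] by simp
qed

lemma Phi_right_bound:
  assumes n: "n \<ge> 3"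
  shows "Phi n (1 - 1 / real n) \<le> 16 / real n"
proof -
  consider "n = 3" | "n = 4" | "n \<ge> 5" using n by linarith
  thus ?thesis
  proof cases
    case 1
    have "(1 - 1 / real n) = 2 / real n" using 1 by simp
    thus ?thesis using Phi_2[OF n] n by simp
  next
    case 2
    have "(1 - 1 / real n) = 3 / real n" using 2 by simp
    thus ?thesis using Phi_3[OF n] n by simp
  qed (rule Phi_last)
qed

theorem proposition3p4:
  fixes n :: nat
  assumes "n \<ge> 3"
  shows "convex_on {0..1} (Phi n)
    \<and> (\<forall>x \<in> {1 / real n .. 1 - 1 / real n}. - 4 / real n \<le> Phi n x \<and> Phi n x \<le> 16 / real n)"
proof (intro conjI ballI)
  have n: "n \<ge> 3" by (rule assms)
  have cv: "convex_on {0..1} (Phi n)" by (rule Phi_convex[OF n])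
  thus "convex_on {0..1} (Phi n)" .
  fix x assume x: "x \<in> {1 / real n .. 1 - 1 / real n}"
  have N: "real n \<ge> 3" using n by simp
  have Np: "real n > 0" using N by simp
  have x1: "1 / real n \<le> x" "x \<le> 1 - 1 / real n" using x by auto
  have i1: "1 / real n < 1 - 1 / real n" using N by (simp add: field_simps)
  have B1: "Phi n (1 / real n) \<le> 16 / real n" using Phi1_bounds(2)[OF n] Np by (simp add: divide_right_mono order_trans)
  have B2: "Phi n (1 - 1 / real n) \<le> 16 / real n" by (rule Phi_right_bound[OF n])
  show "Phi n x \<le> 16 / real n"
  proof (cases "x = 1 / real n \<or> x = 1 - 1 / real n")
    case True thus ?thesis using B1 B2 by auto
  next
    case False
    hence xs: "1 / real n < x" "x < 1 - 1 / real n" using x1 by auto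
    have "(1 - 1 / real n - 1 / real n) * Phi n x \<le> (1 - 1 / real n - x) * Phi n (1 / real n) + (x - 1 / real n) * Phi n (1 - 1 / real n)"
      by (rule chord[OF cv]) (use xs Np in auto)
    also have "\<dots> \<le> (1 - 1 / real n - x) * (16 / real n) + (x - 1 / real n) * (16 / real n)"
      using xs B1 B2 by (intro add_mono mult_left_mono) auto
    also have "\<dots> = ((1 - 1 / real n - x) + (x - 1 / real n)) * (16 / real n)" by (rule distrib_right[symmetric])
    also have "(1 - 1 / real n - x) + (x - 1 / real n) = 1 - 1 / real n - 1 / real n" by simp
    finally have "(1 - 1 / real n - 1 / real n) * Phi n x \<le> (1 - 1 / real n - 1 / real n) * (16 / real n)" .
    moreover have "1 - 1 / real n - 1 / real n > 0" using i1 by simp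
    ultimately show ?thesis by (simp only: mult_le_cancel_left_pos)
  qed
  have P2: "Phi n (2 / real n) = 0" by (rule Phi_2[OF n])
  have P3: "Phi n (3 / real n) = 0" by (rule Phi_3[OF n])
  have le31: "3 / real n \<le> 1" using N by simp
  have x0: "0 \<le> x" "x \<le> 1"
  proof -
    have "0 \<le> 1 / real n" using Np by simp
    thus "0 \<le> x" using x1 by linarith
    thus "x \<le> 1" using x1 \<open>0 \<le> 1 / real n\<close> by linarith
  qed
  show "- 4 / real n \<le> Phi n x"
  proof -
    consider "x \<le> 2 / real n" | "3 / real n \<le> x" | "2 / real n < x \<and> x < 3 / real n" by linarith
    thus ?thesis
    proof cases
      case 1
      have "0 \<le> Phi n x"
      proof (cases "x = 2 / real n")
        case True thus ?thesis using P2 by simp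
      next
        case False
        hence xl: "x < 2 / real n" using 1 by simp
        have "(3 / real n - x) * Phi n (2 / real n) \<le> (3 / real n - 2 / real n) * Phi n x + (2 / real n - x) * Phi n (3 / real n)"
          by (rule chord[OF cv]) (use xl x0 le31 Np in \<open>auto simp: divide_strict_right_mono\<close>)
        hence "0 \<le> (1 / real n) * Phi n x" using P2 P3 by (simp add: diff_divide_distrib[symmetric])
        thus ?thesis using Np by (simp add: zero_le_mult_iff zero_le_divide_iff)
      qed
      moreover have "- 4 / real n \<le> 0" using Np by simp
      ultimately show ?thesis by linarith
    next
      case 2
      have "0 \<le> Phi n x"
      proof (cases "x = 3 / real n")
        case True thus ?thesis using P3 by simp
      next
        case False
        hence xl: "3 / real n < x" using 2 by simp
        have "(x - 2 / real n) * Phi n (3 / real n) \<le> (x - 3 / real n) * Phi n (2 / real n) + (3 / real n - 2 / real n) * Phi n x"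
          by (rule chord[OF cv]) (use xl x0 le31 Np in \<open>auto simp: divide_strict_right_mono\<close>)
        hence "0 \<le> (1 / real n) * Phi n x" using P2 P3 by (simp add: diff_divide_distrib[symmetric])
        thus ?thesis using Np by (simp add: zero_le_mult_iff zero_le_divide_iff)
      qed
      moreover have "- 4 / real n \<le> 0" using Np by simp
      ultimately show ?thesis by linarith
    next
      case 3
      have "(x - 1 / real n) * Phi n (2 / real n) \<le> (x - 2 / real n) * Phi n (1 / real n) + (2 / real n - 1 / real n) * Phi n x"
        by (rule chord[OF cv]) (use 3 Np x0 in \<open>auto simp: divide_strict_right_mono\<close>)
      hence h: "0 \<le> (x - 2 / real n) * Phi n (1 / real n) + (1 / real n) * Phi n x"
        using P2 by (simp add: diff_divide_distrib[symmetric])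
      have "(x - 2 / real n) * Phi n (1 / real n) \<le> (1 / real n) * Phi n (1 / real n)"
        using 3 Phi1_bounds(1)[OF n] by (intro mult_right_mono) (auto simp: diff_divide_distrib[symmetric] algebra_simps)
      also have "\<dots> \<le> (1 / real n) * (4 / real n)" using Phi1_bounds(2)[OF n] Np by (intro mult_left_mono) auto
      finally have "0 \<le> (1 / real n) * (4 / real n) + (1 / real n) * Phi n x" using h by linarith
      hence "0 \<le> (1 / real n) * (4 / real n + Phi n x)" by (simp add: distrib_left)
      hence "0 \<le> 4 / real n + Phi n x" using Np by (simp add: zero_le_mult_iff zero_le_divide_iff)
      thus ?thesis by simp
    qed
  qed
qed

end
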